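(* Let $X$ be a set and $\mathcal{T}$ a topology on $X$. There exists a surjection $f:\mathcal{P}(X)\to\{-1,0,1\}$ satisfying $f(A)+f(B)=f(A\cup B)+f(A\cap B)$ for all $A,B\subseteq X$, such that $\mathcal{T}=\{\varnothing,X\}\cup f^{-1}(1)$ or $\mathcal{T}=\{\varnothing,X\}\cup f^{-1}(-1)$, if and only if $\mathcal{T}$ has one of the following forms: (Form 1) there exist $a\in X$ and an ultrafilter $\mathcal{F}'$ on $X\setminus\{a\}$ such that $\mathcal{T}=\{\varnothing,X\}\cup\mathcal{F}'$ or $\mathcal{T}=\{\varnothing,X\}\cup\{\{a\}\cup F: F\in\mathcal{F}'\}$; (Form 2) there exist $A\subseteq X$ and free ultrafilters $\mathcal{F}'$ on $A$ and $\mathcal{F}''$ on $X\setminus A$ such that $\mathcal{T}=\{\varnothing,X\}\cup\{F'\cup F'': F'\in\mathcal{F}',\,F''\in\mathcal{F}''\}$; (Form 3) there exist $a\ne b$ in $X$ such that $\mathcal{T}=\{\varnothing,X\}\cup\mathcal{P}(X\setminus\{a,b\})$.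
   Context: $\mathcal{P}(Y)$ denotes the power set of $Y$. An ultrafilter on a set $Y$ is a maximal proper filter of subsets of $Y$; it is free if the intersection of all its members is empty. *)

theory Defs
  imports "HOL-Analysis.Analysis"
begin

definition filter_on :: "'a set \<Rightarrow> 'a set set \<Rightarrow> bool" where
  "filter_on Y F \<longleftrightarrow> F \<subseteq> Pow Y \<and> Y \<in> F
     \<and> (\<forall>A B. A \<in> F \<longrightarrow> B \<in> F \<longrightarrow> A \<inter> B \<in> F)
     \<and> (\<forall>A B. A \<in> F \<longrightarrow> A \<subseteq> B \<longrightarrow> B \<subseteq> Y \<longrightarrow> B \<in> F)"

definition proper_filter_on :: "'a set \<Rightarrow> 'a set set \<Rightarrow> bool" where
  "proper_filter_on Y F \<longleftrightarrow> filter_on Y F \<and> {} \<notin> F"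

definition ultrafilter_on :: "'a set \<Rightarrow> 'a set set \<Rightarrow> bool" where
  "ultrafilter_on Y F \<longleftrightarrow> proper_filter_on Y F
     \<and> (\<forall>G. proper_filter_on Y G \<longrightarrow> F \<subseteq> G \<longrightarrow> G = F)"

definition free_ultrafilter_on :: "'a set \<Rightarrow> 'a set set \<Rightarrow> bool" where
  "free_ultrafilter_on Y F \<longleftrightarrow> ultrafilter_on Y F \<and> \<Inter> F = {}"

end

theory Submission
  imports Defs
begin
definition modular :: "'a set \<Rightarrow> ('a set \<Rightarrow> int) \<Rightarrow> bool" where
  "modular X f \<longleftrightarrow> (\<forall>A B. A \<subseteq> X \<longrightarrow> B \<subseteq> X \<longrightarrow> f A + f B = f (A \<union> B) + f (A \<inter> B))"

lemma mod_disj: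
  assumes "modular X f" "A \<subseteq> X" "B \<subseteq> X" "A \<inter> B = {}"
  shows "f (A \<union> B) = f A + f B - f {}"
proof -
  have "f A + f B = f (A \<union> B) + f (A \<inter> B)" using assms unfolding modular_def by blast
  thus ?thesis using assms(4) by simp
qed

lemma mod_sub:
  assumes "modular X f" "B \<subseteq> A" "A \<subseteq> X"
  shows "f A = f B + f (A - B) - f {}"
proof -
  have e: "A = B \<union> (A - B)" using assms by auto
  have "f (B \<union> (A - B)) = f B + f (A - B) - f {}"
    by (rule mod_disj[OF assms(1)]) (use assms in auto)
  thus ?thesis using e by simp
qed

lemma ultra_of:
  assumes m: "modular X f" and Y: "Y \<subseteq> X"
    and vals: "\<And>B. B \<subseteq> Y \<Longrightarrow> f B = c \<or> f B = d"
    and e: "f {} = c" and fY: "f Y = d" and cd: "d = c + 1"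
  shows "ultrafilter_on Y {B. B \<subseteq> Y \<and> f B = d}"
proof -
  let ?F = "{B. B \<subseteq> Y \<and> f B = d}"
  have filt: "filter_on Y ?F"
    unfolding filter_on_def
  proof (intro conjI allI impI)
    show "?F \<subseteq> Pow Y" by auto
    show "Y \<in> ?F" using fY by auto
  next
    fix A B assume A: "A \<in> ?F" and B: "B \<in> ?F"
    have "f A + f B = f (A\<union>B) + f (A\<inter>B)" using m A B Y unfolding modular_def by blast
    moreover have "f (A\<union>B) = c \<or> f (A\<union>B) = d" by (rule vals) (use A B in auto)
    moreover have "f (A\<inter>B) = c \<or> f (A\<inter>B) = d" by (rule vals) (use A B in auto)
    ultimately show "A \<inter> B \<in> ?F" using A B cd by auto
  next
    fix A B assume A: "A \<in> ?F" and AB: "A \<subseteq> B" and BY: "B \<subseteq> Y"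
    have "f B = f A + f (B - A) - f {}" using mod_sub[OF m AB] BY Y by auto
    moreover have "f (B-A) = c \<or> f (B-A) = d" by (rule vals) (use BY in auto)
    ultimately show "B \<in> ?F" using A BY e vals[OF BY] cd by auto
  qed
  have pf: "proper_filter_on Y ?F" using filt e cd unfolding proper_filter_on_def by auto
  show ?thesis unfolding ultrafilter_on_def
  proof (intro conjI allI impI pf)
    fix G assume G: "proper_filter_on Y G" and FG: "?F \<subseteq> G"
    show "G = ?F"
    proof
      show "G \<subseteq> ?F"
      proof
        fix B assume B: "B \<in> G"
        have BY: "B \<subseteq> Y" using G B unfolding proper_filter_on_def filter_on_def by auto
        show "B \<in> ?F"
        proof (rule ccontr)
          assume "B \<notin> ?F"
          hence fB: "f B = c" using vals[OF BY] BY by auto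
          have "f Y = f B + f (Y - B) - f {}" using mod_sub[OF m BY Y] .
          hence "Y - B \<in> ?F" using fB e fY cd by auto
          hence "Y - B \<in> G" using FG by auto
          hence "B \<inter> (Y - B) \<in> G" using G B unfolding proper_filter_on_def filter_on_def by blast
          moreover have "B \<inter> (Y-B) = {}" by auto
          ultimately show False using G unfolding proper_filter_on_def by auto
        qed
      qed
    qed (rule FG)
  qed
qed

lemma ultra_free:
  assumes m: "modular X f" and Y: "Y \<subseteq> X"
    and vals: "\<And>B. B \<subseteq> Y \<Longrightarrow> f B = c \<or> f B = d"
    and e: "f {} = c" and fY: "f Y = d" and cd: "d = c + 1"
    and ns: "\<And>x. x \<in> Y \<Longrightarrow> f {x} \<noteq> d"
  shows "\<Inter>{B. B \<subseteq> Y \<and> f B = d} = {}"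
proof (rule ccontr)
  assume "\<Inter>{B. B \<subseteq> Y \<and> f B = d} \<noteq> {}"
  then obtain x where x: "x \<in> \<Inter>{B. B \<subseteq> Y \<and> f B = d}" by blast
  have xY: "x \<in> Y" using x fY by auto
  have fx: "f {x} = c" using vals[of "{x}"] xY ns[OF xY] by auto
  have "f Y = f {x} + f (Y - {x}) - f {}" using mod_sub[OF m _ Y, of "{x}"] xY by auto
  hence "f (Y - {x}) = d" using fx e fY by auto
  hence "x \<in> Y - {x}" using x by auto
  thus False by auto
qed

lemma uf_basic:
  assumes "ultrafilter_on Y F"
  shows "F \<subseteq> Pow Y" "Y \<in> F" "{} \<notin> F" "\<And>A B. A\<in>F \<Longrightarrow> B\<in>F \<Longrightarrow> A\<inter>B\<in>F"
    "\<And>A B. A\<in>F \<Longrightarrow> A\<subseteq>B \<Longrightarrow> B\<subseteq>Y \<Longrightarrow> B\<in>F"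
  using assms unfolding ultrafilter_on_def proper_filter_on_def filter_on_def by blast+

lemma uf_compl:
  assumes U: "ultrafilter_on Y F" and BY: "B \<subseteq> Y" and nB: "B \<notin> F"
  shows "Y - B \<in> F"
proof -
  let ?G = "{C. C \<subseteq> Y \<and> (\<exists>D\<in>F. D \<inter> B \<subseteq> C)}"
  have filt: "filter_on Y ?G" unfolding filter_on_def
  proof (intro conjI allI impI)
    show "?G \<subseteq> Pow Y" by auto
    show "Y \<in> ?G" using uf_basic(2)[OF U] by auto
  next
    fix A C assume "A \<in> ?G" "C \<in> ?G"
    then obtain D1 D2 where "D1\<in>F" "D1\<inter>B \<subseteq> A" "D2\<in>F" "D2\<inter>B\<subseteq>C" "A\<subseteq>Y" "C\<subseteq>Y" by auto
    moreover have "D1 \<inter> D2 \<in> F" using uf_basic(4)[OF U] calculation by blast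
    ultimately show "A \<inter> C \<in> ?G" by blast
  next
    fix A C assume "A \<in> ?G" "A \<subseteq> C" "C \<subseteq> Y" then show "C \<in> ?G" by blast
  qed
  have FG: "F \<subseteq> ?G" using uf_basic(1)[OF U] by blast
  have BG: "B \<in> ?G" using BY uf_basic(2)[OF U] by blast
  have "{} \<in> ?G"
  proof (rule ccontr)
    assume "{} \<notin> ?G"
    hence "proper_filter_on Y ?G" using filt unfolding proper_filter_on_def by blast
    hence "?G = F" using U FG unfolding ultrafilter_on_def by blast
    thus False using BG nB by simp
  qed
  then obtain D where D: "D \<in> F" "D \<inter> B \<subseteq> {}" by blast
  moreover have "D \<subseteq> Y" using uf_basic(1)[OF U] D by blast
  moreover have "D \<subseteq> Y - B" using calculation by blast
  ultimately show ?thesis using uf_basic(5)[OF U, of D "Y - B"] by blast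
qed

definition ind :: "'a set \<Rightarrow> 'a set set \<Rightarrow> 'a set \<Rightarrow> int" where
  "ind Y F A = (if A \<inter> Y \<in> F then 1 else 0)"

lemma ind_mod:
  assumes U: "ultrafilter_on Y F"
  shows "ind Y F A + ind Y F B = ind Y F (A \<union> B) + ind Y F (A \<inter> B)"
proof -
  have e1: "(A \<union> B) \<inter> Y = (A\<inter>Y) \<union> (B\<inter>Y)" and e2: "(A\<inter>B)\<inter>Y = (A\<inter>Y)\<inter>(B\<inter>Y)" by auto
  define A' where "A' = A\<inter>Y"
  define B' where "B' = B\<inter>Y"
  have AY: "A' \<subseteq> Y" "B' \<subseteq> Y" by (auto simp: A'_def B'_def)
  have c1: "A' \<union> B' \<in> F \<Longrightarrow> A' \<in> F \<or> B' \<in> F"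
  proof (rule ccontr)
    assume u: "A'\<union>B' \<in> F" and "\<not> (A' \<in> F \<or> B' \<in> F)"
    hence "Y - A' \<in> F" "Y - B' \<in> F" using uf_compl[OF U] AY by auto
    hence "(Y - A') \<inter> (Y - B') \<in> F" using uf_basic(4)[OF U] by blast
    hence "(Y-A') \<inter> (Y-B') \<inter> (A'\<union>B') \<in> F" using uf_basic(4)[OF U] u by blast
    moreover have "(Y-A') \<inter> (Y-B') \<inter> (A'\<union>B') = {}" by auto
    ultimately show False using uf_basic(3)[OF U] by simp
  qed
  have c2: "A' \<in> F \<Longrightarrow> A' \<union> B' \<in> F" using uf_basic(5)[OF U, of A' "A'\<union>B'"] AY by auto
  have c3: "B' \<in> F \<Longrightarrow> A' \<union> B' \<in> F" using uf_basic(5)[OF U, of B' "A'\<union>B'"] AY by auto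
  have c4: "A'\<inter>B' \<in> F \<Longrightarrow> A' \<in> F" using uf_basic(5)[OF U, of "A'\<inter>B'" A'] AY by auto
  have c5: "A'\<inter>B' \<in> F \<Longrightarrow> B' \<in> F" using uf_basic(5)[OF U, of "A'\<inter>B'" B'] AY by auto
  have c6: "A'\<in>F \<Longrightarrow> B'\<in>F \<Longrightarrow> A'\<inter>B' \<in> F" using uf_basic(4)[OF U] by blast
  show ?thesis unfolding ind_def e1 e2 A'_def[symmetric] B'_def[symmetric]
    using c1 c2 c3 c4 c5 c6 by auto
qed

definition F1 where "F1 X T \<longleftrightarrow> (\<exists>a \<in> X. \<exists>F'. ultrafilter_on (X - {a}) F'
              \<and> ({U. openin T U} = {{}, X} \<union> F'
                 \<or> {U. openin T U} = {{}, X} \<union> (\<lambda>F. insert a F) ` F'))"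
definition F2 where "F2 X T \<longleftrightarrow> (\<exists>A. A \<subseteq> X \<and> (\<exists>F' F''. free_ultrafilter_on A F' \<and> free_ultrafilter_on (X - A) F''
              \<and> {U. openin T U} = {{}, X} \<union> {G' \<union> G'' | G' G''. G' \<in> F' \<and> G'' \<in> F''}))"
definition F3 where "F3 X T \<longleftrightarrow> (\<exists>a \<in> X. \<exists>b \<in> X. a \<noteq> b
              \<and> {U. openin T U} = {{}, X} \<union> Pow (X - {a, b}))"
definition LHS where "LHS X T \<longleftrightarrow> (\<exists>f :: 'a set \<Rightarrow> int.
            f ` Pow X = {-1, 0, 1}
          \<and> (\<forall>A B. A \<subseteq> X \<longrightarrow> B \<subseteq> X \<longrightarrow> f A + f B = f (A \<union> B) + f (A \<inter> B))
          \<and> ({U. openin T U} = {{}, X} \<union> {A \<in> Pow X. f A = 1}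
             \<or> {U. openin T U} = {{}, X} \<union> {A \<in> Pow X. f A = -1}))"

lemma img3: "x \<in> A \<Longrightarrow> y \<in> A \<Longrightarrow> z \<in> A \<Longrightarrow> f x = -1 \<Longrightarrow> f y = 0 \<Longrightarrow> f z = (1::int) \<Longrightarrow> {-1,0,1} \<subseteq> f ` A"
  by (metis empty_subsetI image_eqI insert_subset)

lemma ind_vals: "ind Y F A = 0 \<or> ind Y F A = 1"
  by (simp add: ind_def)

lemma form1a:
  assumes a: "a \<in> X" and U: "ultrafilter_on (X - {a}) F'"
    and T: "{U. openin T U} = {{},X} \<union> F'"
  shows "LHS X T"
proof -
  define f where "f A = ind (X-{a}) F' A - (if a \<in> A then 1 else 0)" for A
  have m: "f A + f B = f (A\<union>B) + f (A\<inter>B)" for A B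
  proof -
    have "ind (X-{a}) F' A + ind (X-{a}) F' B = ind (X-{a}) F' (A\<union>B) + ind (X-{a}) F' (A\<inter>B)"
      by (rule ind_mod[OF U])
    thus ?thesis unfolding f_def by auto
  qed
  have W: "{A \<in> Pow X. f A = 1} = F'"
  proof
    show "{A \<in> Pow X. f A = 1} \<subseteq> F'"
    proof
      fix A assume A: "A \<in> {A \<in> Pow X. f A = 1}"
      hence "ind (X-{a}) F' A = 1" "a \<notin> A" using ind_vals[of "X-{a}" F' A] unfolding f_def
        by (auto split: if_splits)
      moreover have "A \<inter> (X - {a}) = A" using A calculation by auto
      ultimately show "A \<in> F'" unfolding ind_def by (auto split: if_splits)
    qed
    show "F' \<subseteq> {A \<in> Pow X. f A = 1}"
    proof
      fix A assume A: "A \<in> F'"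
      hence AY: "A \<subseteq> X - {a}" using uf_basic(1)[OF U] by auto
      hence "A \<inter> (X - {a}) = A" by auto
      thus "A \<in> {A \<in> Pow X. f A = 1}" using A AY unfolding f_def ind_def by auto
    qed
  qed
  have r: "f ` Pow X = {-1,0,1}"
  proof
    show "f ` Pow X \<subseteq> {-1,0,1}" by (auto simp: f_def ind_def split: if_splits)
    have "f {} = 0" using uf_basic(3)[OF U] by (simp add: f_def ind_def)
    moreover have "f (X - {a}) = 1" using uf_basic(2)[OF U] by (simp add: f_def ind_def)
    moreover have "f {a} = -1" using uf_basic(3)[OF U] by (simp add: f_def ind_def)
    ultimately show "{-1,0,1} \<subseteq> f ` Pow X" using a img3[of "{a}" "Pow X" "{}" "X-{a}" f] by auto
  qed
  show ?thesis unfolding LHS_def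
    by (rule exI[of _ f]) (use r m W T in auto)
qed

lemma form1b:
  assumes a: "a \<in> X" and U: "ultrafilter_on (X - {a}) F'"
    and T: "{U. openin T U} = {{},X} \<union> (\<lambda>F. insert a F) ` F'"
  shows "LHS X T"
proof -
  define f where "f A = ind (X-{a}) F' A + (if a \<in> A then 1 else 0) - 1" for A
  have m: "f A + f B = f (A\<union>B) + f (A\<inter>B)" for A B
  proof -
    have "ind (X-{a}) F' A + ind (X-{a}) F' B = ind (X-{a}) F' (A\<union>B) + ind (X-{a}) F' (A\<inter>B)"
      by (rule ind_mod[OF U])
    thus ?thesis unfolding f_def by auto
  qed
  have W: "{A \<in> Pow X. f A = 1} = (\<lambda>F. insert a F) ` F'"
  proof
    show "{A \<in> Pow X. f A = 1} \<subseteq> (\<lambda>F. insert a F) ` F'"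
    proof
      fix A assume A: "A \<in> {A \<in> Pow X. f A = 1}"
      hence i: "ind (X-{a}) F' A = 1" "a \<in> A" using ind_vals[of "X-{a}" F' A] unfolding f_def
        by (auto split: if_splits)
      have "A \<inter> (X - {a}) = A - {a}" using A by auto
      hence "A - {a} \<in> F'" using i(1) unfolding ind_def by (auto split: if_splits)
      moreover have "A = insert a (A - {a})" using i(2) by auto
      ultimately show "A \<in> (\<lambda>F. insert a F) ` F'" by blast
    qed
    show "(\<lambda>F. insert a F) ` F' \<subseteq> {A \<in> Pow X. f A = 1}"
    proof
      fix A assume "A \<in> (\<lambda>F. insert a F) ` F'"
      then obtain F where F: "F \<in> F'" and A: "A = insert a F" by blast
      hence AY: "F \<subseteq> X - {a}" using uf_basic(1)[OF U] by auto
      hence "A \<inter> (X - {a}) = F" using A by auto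
      thus "A \<in> {A \<in> Pow X. f A = 1}" using F AY A a unfolding f_def ind_def by auto
    qed
  qed
  have r: "f ` Pow X = {-1,0,1}"
  proof
    show "f ` Pow X \<subseteq> {-1,0,1}" by (auto simp: f_def ind_def split: if_splits)
    have "f {} = -1" using uf_basic(3)[OF U] by (simp add: f_def ind_def)
    moreover have "f {a} = 0" using uf_basic(3)[OF U] by (simp add: f_def ind_def)
    moreover have "X \<inter> (X - {a}) = X - {a}" by auto
    hence "f X = 1" using uf_basic(2)[OF U] a by (simp add: f_def ind_def)
    ultimately show "{-1,0,1} \<subseteq> f ` Pow X" using a img3[of "{}" "Pow X" "{a}" "X" f] by auto
  qed
  show ?thesis unfolding LHS_def
    by (rule exI[of _ f]) (use r m W T in auto)
qed

lemma form2:
  assumes A0: "A0 \<subseteq> X" and U1: "ultrafilter_on A0 F'" and U2: "ultrafilter_on (X - A0) F''"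
    and T: "{U. openin T U} = {{}, X} \<union> {G' \<union> G'' | G' G''. G' \<in> F' \<and> G'' \<in> F''}"
  shows "LHS X T"
proof -
  define f where "f A = ind A0 F' A + ind (X - A0) F'' A - 1" for A
  have m: "f A + f B = f (A\<union>B) + f (A\<inter>B)" for A B
  proof -
    have "ind A0 F' A + ind A0 F' B = ind A0 F' (A\<union>B) + ind A0 F' (A\<inter>B)"
      by (rule ind_mod[OF U1])
    moreover have "ind (X-A0) F'' A + ind (X-A0) F'' B = ind (X-A0) F'' (A\<union>B) + ind (X-A0) F'' (A\<inter>B)"
      by (rule ind_mod[OF U2])
    ultimately show ?thesis unfolding f_def by auto
  qed
  have W: "{A \<in> Pow X. f A = 1} = {G' \<union> G'' | G' G''. G' \<in> F' \<and> G'' \<in> F''}"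
  proof
    show "{A \<in> Pow X. f A = 1} \<subseteq> {G' \<union> G'' | G' G''. G' \<in> F' \<and> G'' \<in> F''}"
    proof
      fix A assume A: "A \<in> {A \<in> Pow X. f A = 1}"
      hence i: "ind A0 F' A = 1" "ind (X-A0) F'' A = 1"
        using ind_vals[of A0 F' A] ind_vals[of "X-A0" F'' A] unfolding f_def by auto
      hence "A \<inter> A0 \<in> F'" "A \<inter> (X - A0) \<in> F''" unfolding ind_def by (auto split: if_splits)
      moreover have "A = (A \<inter> A0) \<union> (A \<inter> (X - A0))" using A by auto
      ultimately show "A \<in> {G' \<union> G'' | G' G''. G' \<in> F' \<and> G'' \<in> F''}" by blast
    qed
    show "{G' \<union> G'' | G' G''. G' \<in> F' \<and> G'' \<in> F''} \<subseteq> {A \<in> Pow X. f A = 1}"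
    proof
      fix A assume "A \<in> {G' \<union> G'' | G' G''. G' \<in> F' \<and> G'' \<in> F''}"
      then obtain G' G'' where G: "G' \<in> F'" "G'' \<in> F''" and A: "A = G' \<union> G''" by blast
      have s: "G' \<subseteq> A0" "G'' \<subseteq> X - A0" using G uf_basic(1)[OF U1] uf_basic(1)[OF U2] by auto
      hence "A \<inter> A0 = G'" "A \<inter> (X - A0) = G''" using A by auto
      thus "A \<in> {A \<in> Pow X. f A = 1}" using G s A A0 unfolding f_def ind_def by auto
    qed
  qed
  have r: "f ` Pow X = {-1,0,1}"
  proof
    show "f ` Pow X \<subseteq> {-1,0,1}" by (auto simp: f_def ind_def split: if_splits)
    have "f {} = -1" using uf_basic(3)[OF U1] uf_basic(3)[OF U2] by (simp add: f_def ind_def)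
    moreover have "A0 \<inter> (X - A0) = {}" "A0 \<inter> A0 = A0" by auto
    hence "f A0 = 0" using uf_basic(2)[OF U1] uf_basic(3)[OF U2] by (simp add: f_def ind_def)
    moreover have "X \<inter> (X - A0) = X - A0" "X \<inter> A0 = A0" using A0 by auto
    hence "f X = 1" using uf_basic(2)[OF U1] uf_basic(2)[OF U2] by (simp add: f_def ind_def)
    ultimately show "{-1,0,1} \<subseteq> f ` Pow X" using A0 img3[of "{}" "Pow X" "A0" "X" f] by auto
  qed
  show ?thesis unfolding LHS_def
    by (rule exI[of _ f]) (use r m W T in auto)
qed

lemma form3:
  assumes a: "a \<in> X" and b: "b \<in> X" and ab: "a \<noteq> b"
    and T: "{U. openin T U} = {{}, X} \<union> Pow (X - {a, b})"
  shows "LHS X T"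
proof -
  define f :: "'a set \<Rightarrow> int" where "f A = 1 - (if a \<in> A then 1 else 0) - (if b \<in> A then 1 else 0)" for A
  have m: "f A + f B = f (A\<union>B) + f (A\<inter>B)" for A B
    unfolding f_def by auto
  have W: "{A \<in> Pow X. f A = 1} = Pow (X - {a, b})"
    unfolding f_def by (auto split: if_splits)
  have r: "f ` Pow X = {-1,0,1}"
  proof
    show "f ` Pow X \<subseteq> {-1,0,1}" by (auto simp: f_def split: if_splits)
    have "f {} = 1" "f {a} = 0" "f X = -1" using a b ab by (auto simp: f_def)
    thus "{-1,0,1} \<subseteq> f ` Pow X" using a img3[of "X" "Pow X" "{a}" "{}" f] by auto
  qed
  show ?thesis unfolding LHS_def
    by (rule exI[of _ f]) (use r m W T in auto)
qed

lemma case_m1: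
  assumes m: "modular X f" and vals: "\<And>A. A \<subseteq> X \<Longrightarrow> f A \<in> {-1,0,1}"
    and ex: "\<And>v. v \<in> {-1,0,1} \<Longrightarrow> \<exists>A\<subseteq>X. f A = v"
    and H: "{U. openin T U} = {{},X} \<union> {A \<in> Pow X. f A = 1}"
    and e: "f {} = -1"
  shows "F1 X T \<or> F2 X T"
proof -
  have mono: "f B \<le> f A" if "B \<subseteq> A" "A \<subseteq> X" for A B
  proof -
    have "f A = f B + f (A - B) - f {}" using mod_sub[OF m that] .
    moreover have "f (A - B) \<in> {-1,0,1}" using vals[of "A - B"] that by auto
    ultimately show ?thesis using e by auto
  qed
  obtain S where S: "S \<subseteq> X" "f S = 0" using ex[of 0] by auto
  obtain A1 where A1: "A1 \<subseteq> X" "f A1 = 1" using ex[of 1] by auto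
  have fX: "f X = 1" using mono[OF A1(1)] A1 vals[of X] by auto
  show ?thesis
  proof (cases "\<exists>a\<in>X. f {a} = 0")
    case True
    then obtain a where a: "a \<in> X" "f {a} = 0" by auto
    let ?Y = "X - {a}"
    have "f X = f {a} + f ?Y - f {}" using mod_sub[OF m, of "{a}" X] a by auto
    hence fY: "f ?Y = 0" using a fX e by auto
    have vY: "f B = -1 \<or> f B = 0" if "B \<subseteq> ?Y" for B
      using mono[of B ?Y] that fY vals[of B] by auto
    let ?F = "{B. B \<subseteq> ?Y \<and> f B = 0}"
    have U: "ultrafilter_on ?Y ?F"
      by (rule ultra_of[OF m _ vY e fY]) auto
    have W: "{A \<in> Pow X. f A = 1} = (\<lambda>F. insert a F) ` ?F"
    proof
      show "{A \<in> Pow X. f A = 1} \<subseteq> (\<lambda>F. insert a F) ` ?F"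
      proof
        fix A assume A: "A \<in> {A \<in> Pow X. f A = 1}"
        have aA: "a \<in> A"
        proof (rule ccontr)
          assume "a \<notin> A"
          hence "A \<subseteq> ?Y" using A by auto
          hence "f A = -1 \<or> f A = 0" by (rule vY)
          thus False using A by simp
        qed
        have "f A = f {a} + f (A - {a}) - f {}" using mod_sub[OF m, of "{a}" A] aA A by auto
        hence "f (A - {a}) = 0" using A a e by auto
        hence "A - {a} \<in> ?F" using A by auto
        moreover have "A = insert a (A - {a})" using aA by auto
        ultimately show "A \<in> (\<lambda>F. insert a F) ` ?F" by blast
      qed
      show "(\<lambda>F. insert a F) ` ?F \<subseteq> {A \<in> Pow X. f A = 1}"
      proof
        fix A assume "A \<in> (\<lambda>F. insert a F) ` ?F"
        then obtain F where F: "F \<subseteq> ?Y" "f F = 0" and A: "A = insert a F" by blast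
        have "f (insert a F) = f {a} + f (insert a F - {a}) - f {}"
          using mod_sub[OF m, of "{a}" "insert a F"] a F by auto
        moreover have "insert a F - {a} = F" using F by auto
        ultimately show "A \<in> {A \<in> Pow X. f A = 1}" using A a F e by auto
      qed
    qed
    have HW: "{U. openin T U} = {{},X} \<union> (\<lambda>F. insert a F) ` ?F" using H W by simp
    have "F1 X T" unfolding F1_def
      by (intro bexI[OF _ a(1)] exI[of _ ?F] conjI disjI2 U HW)
    thus ?thesis by simp
  next
    case False
    have fXS: "f (X - S) = 0" using mod_sub[OF m S(1)] S fX e by auto
    have vS: "f B = -1 \<or> f B = 0" if "B \<subseteq> S" for B
      using mono[of B S] that S vals[of B] by auto
    have vXS: "f B = -1 \<or> f B = 0" if "B \<subseteq> X - S" for B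
      using mono[of B "X - S"] that fXS vals[of B] by auto
    let ?F1 = "{B. B \<subseteq> S \<and> f B = 0}"
    let ?F2 = "{B. B \<subseteq> X - S \<and> f B = 0}"
    have U1: "ultrafilter_on S ?F1" by (rule ultra_of[OF m S(1) vS e S(2)]) auto
    have U2: "ultrafilter_on (X - S) ?F2" by (rule ultra_of[OF m _ vXS e fXS]) auto
    have fr1: "\<Inter>?F1 = {}" by (rule ultra_free[OF m S(1) vS e S(2)]) (use False S in auto)
    have fr2: "\<Inter>?F2 = {}" by (rule ultra_free[OF m _ vXS e fXS]) (use False in auto)
    have W: "{A \<in> Pow X. f A = 1} = {G' \<union> G'' | G' G''. G' \<in> ?F1 \<and> G'' \<in> ?F2}"
    proof
      show "{A \<in> Pow X. f A = 1} \<subseteq> {G' \<union> G'' | G' G''. G' \<in> ?F1 \<and> G'' \<in> ?F2}"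
      proof
        fix A assume A: "A \<in> {A \<in> Pow X. f A = 1}"
        have "f (A \<inter> S \<union> (A - S)) = f (A \<inter> S) + f (A - S) - f {}"
          by (rule mod_disj[OF m]) (use A S in auto)
        moreover have "A \<inter> S \<union> (A - S) = A" by auto
        moreover have "f (A \<inter> S) = -1 \<or> f (A \<inter> S) = 0" by (rule vS) auto
        moreover have "f (A - S) = -1 \<or> f (A - S) = 0" by (rule vXS) (use A in auto)
        ultimately have "f (A \<inter> S) = 0" "f (A - S) = 0" using A e by auto
        hence "A \<inter> S \<in> ?F1" "A - S \<in> ?F2" using A by auto
        thus "A \<in> {G' \<union> G'' | G' G''. G' \<in> ?F1 \<and> G'' \<in> ?F2}"
          using \<open>A \<inter> S \<union> (A - S) = A\<close> by blast
      qed
      show "{G' \<union> G'' | G' G''. G' \<in> ?F1 \<and> G'' \<in> ?F2} \<subseteq> {A \<in> Pow X. f A = 1}"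
      proof
        fix A assume "A \<in> {G' \<union> G'' | G' G''. G' \<in> ?F1 \<and> G'' \<in> ?F2}"
        then obtain G' G'' where G: "G' \<in> ?F1" "G'' \<in> ?F2" and A: "A = G' \<union> G''" by blast
        have "f (G' \<union> G'') = f G' + f G'' - f {}"
          by (rule mod_disj[OF m]) (use G S in auto)
        thus "A \<in> {A \<in> Pow X. f A = 1}" using G A e S by auto
      qed
    qed
    have HW: "{U. openin T U} = {{}, X} \<union> {G' \<union> G'' | G' G''. G' \<in> ?F1 \<and> G'' \<in> ?F2}"
      using H W by simp
    have "F2 X T" unfolding F2_def free_ultrafilter_on_def
      by (intro exI[of _ S] exI[of _ ?F1] exI[of _ ?F2] conjI S(1) U1 U2 fr1 fr2 HW)
    thus ?thesis by simp
  qed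
qed

lemma open_of:
  assumes H: "{U. openin T U} = {{},X} \<union> {A \<in> Pow X. f A = 1}"
  shows "openin T U \<longleftrightarrow> U = {} \<or> U = X \<or> (U \<subseteq> X \<and> f U = 1)"
proof -
  have "U \<in> {U. openin T U} \<longleftrightarrow> U \<in> {{},X} \<union> {A \<in> Pow X. f A = 1}" using H by simp
  thus ?thesis by auto
qed

lemma case_p1:
  assumes m: "modular X f" and vals: "\<And>A. A \<subseteq> X \<Longrightarrow> f A \<in> {-1,0,1}"
    and ex: "\<And>v. v \<in> {-1,0,1} \<Longrightarrow> \<exists>A\<subseteq>X. f A = v"
    and H: "{U. openin T U} = {{},X} \<union> {A \<in> Pow X. f A = 1}"
    and e: "f {} = 1"
  shows "F3 X T"
proof -
  note op = open_of[OF H]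
  have anti: "f A \<le> f B" if "B \<subseteq> A" "A \<subseteq> X" for A B
  proof -
    have "f A = f B + f (A - B) - f {}" using mod_sub[OF m that] .
    moreover have "f (A - B) \<in> {-1,0,1}" using vals[of "A - B"] that by auto
    ultimately show ?thesis using e by auto
  qed
  obtain S where S: "S \<subseteq> X" "f S = 0" using ex[of 0] by auto
  obtain A1 where A1: "A1 \<subseteq> X" "f A1 = -1" using ex[of "-1"] by auto
  have fX: "f X = -1" using anti[OF A1(1)] A1 vals[of X] by auto
  have fXS: "f (X - S) = 0" using mod_sub[OF m S(1)] S fX e by auto
  have pt: "\<exists>a\<in>Z. f {a} = 0" if Z: "Z \<subseteq> X" "f Z = 0" for Z
  proof (rule ccontr)
    assume nz: "\<not> (\<exists>a\<in>Z. f {a} = 0)"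
    have "openin T {x}" if x: "x \<in> Z" for x
    proof -
      have "f Z \<le> f {x}" using anti[of "{x}" Z] x Z by auto
      moreover have "f {x} \<in> {-1,0,1}" using vals[of "{x}"] x Z by auto
      ultimately have "f {x} = 1" using nz x Z by auto
      thus ?thesis using op x Z by auto
    qed
    hence "openin T (\<Union>((\<lambda>x. {x}) ` Z))" by (intro openin_Union) auto
    moreover have "\<Union>((\<lambda>x. {x}) ` Z) = Z" by auto
    ultimately have "openin T Z" by simp
    thus False using op Z e fX by auto
  qed
  obtain a where a: "a \<in> S" "f {a} = 0" using pt[OF S] by auto
  obtain b where b: "b \<in> X - S" "f {b} = 0" using pt[OF _ fXS] by auto
  have ab: "a \<noteq> b" using a b by auto
  have aX: "a \<in> X" and bX: "b \<in> X" using a b S by auto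
  have "f ({a} \<union> {b}) = f {a} + f {b} - f {}" by (rule mod_disj[OF m]) (use aX bX ab in auto)
  hence fab: "f {a,b} = -1" using a b e by (simp add: insert_commute)
  have "f X = f {a,b} + f (X - {a,b}) - f {}" using mod_sub[OF m, of "{a,b}" X] aX bX by auto
  hence fR: "f (X - {a,b}) = 1" using fab fX e by auto
  have W: "{A \<in> Pow X. f A = 1} = Pow (X - {a,b})"
  proof
    show "{A \<in> Pow X. f A = 1} \<subseteq> Pow (X - {a,b})"
    proof
      fix A assume A: "A \<in> {A \<in> Pow X. f A = 1}"
      have "a \<notin> A" using anti[of "{a}" A] A a by auto
      moreover have "b \<notin> A" using anti[of "{b}" A] A b by auto
      ultimately show "A \<in> Pow (X - {a,b})" using A by auto
    qed
    show "Pow (X - {a,b}) \<subseteq> {A \<in> Pow X. f A = 1}"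
    proof
      fix A assume A: "A \<in> Pow (X - {a,b})"
      have "f (X - {a,b}) \<le> f A" using anti[of A "X - {a,b}"] A by auto
      moreover have "f A \<in> {-1,0,1}" using vals[of A] A by auto
      ultimately show "A \<in> {A \<in> Pow X. f A = 1}" using fR A by auto
    qed
  qed
  have HW: "{U. openin T U} = {{}, X} \<union> Pow (X - {a, b})" using H W by simp
  show ?thesis unfolding F3_def
    by (intro bexI[OF _ aX] bexI[OF _ bX] conjI ab HW)
qed

lemma case_0:
  assumes m: "modular X f" and vals: "\<And>A. A \<subseteq> X \<Longrightarrow> f A \<in> {-1,0,1}"
    and ex: "\<And>v. v \<in> {-1,0,1} \<Longrightarrow> \<exists>A\<subseteq>X. f A = v"
    and H: "{U. openin T U} = {{},X} \<union> {A \<in> Pow X. f A = 1}"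
    and e: "f {} = 0"
  shows "F1 X T"
proof -
  note op = open_of[OF H]
  obtain A1 where A1: "A1 \<subseteq> X" "f A1 = 1" using ex[of 1] by auto
  obtain B1 where B1: "B1 \<subseteq> X" "f B1 = -1" using ex[of "-1"] by auto
  define P where "P = A1 - B1"
  define S where "S = B1 - A1"
  have PX: "P \<subseteq> X" and SX: "S \<subseteq> X" and PS: "P \<inter> S = {}" using A1 B1 by (auto simp: P_def S_def)
  have d1: "A1 - A1 \<inter> B1 = P" "B1 - A1 \<inter> B1 = S" by (auto simp: P_def S_def)
  have "f A1 = f (A1 \<inter> B1) + f (A1 - A1 \<inter> B1) - f {}" by (rule mod_sub[OF m]) (use A1 in auto)
  hence q1: "f A1 = f (A1 \<inter> B1) + f P" using d1 e by simp
  have "f B1 = f (A1 \<inter> B1) + f (B1 - A1 \<inter> B1) - f {}" by (rule mod_sub[OF m]) (use B1 in auto)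
  hence q2: "f B1 = f (A1 \<inter> B1) + f S" using d1 e by simp
  have v1: "f (A1 \<inter> B1) \<in> {-1,0,1}" using vals[of "A1 \<inter> B1"] A1 by auto
  have v2: "f P \<in> {-1,0,1}" using vals[OF PX] .
  have v3: "f S \<in> {-1,0,1}" using vals[OF SX] .
  have fP: "f P = 1" and fS: "f S = -1" using q1 q2 v1 v2 v3 A1 B1 by auto
  have "\<exists>b\<in>S. f {b} = -1"
  proof (rule ccontr)
    assume nb: "\<not> (\<exists>b\<in>S. f {b} = -1)"
    have "S \<noteq> {}" using fS e by auto
    then obtain x0 where x0: "x0 \<in> S" by auto
    have px: "f (P \<union> {x}) = 1 \<and> f {x} = 0" if x: "x \<in> S" for x
    proof -
      have "f (P \<union> {x}) = f P + f {x} - f {}" by (rule mod_disj[OF m PX]) (use x SX PS in auto)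
      moreover have "f (P \<union> {x}) \<in> {-1,0,1}" using vals[of "P \<union> {x}"] PX SX x by auto
      moreover have "f {x} \<in> {-1,0,1}" using vals[of "{x}"] SX x by auto
      ultimately show ?thesis using nb x fP e by auto
    qed
    let ?K = "insert P ((\<lambda>x. P \<union> {x}) ` (S - {x0}))"
    have oP: "openin T P" using op fP PX by auto
    have oPx: "openin T (P \<union> {x})" if "x \<in> S - {x0}" for x
    proof -
      have "f (P \<union> {x}) = 1" using px that by auto
      moreover have "P \<union> {x} \<subseteq> X" using PX SX that by auto
      ultimately show ?thesis using op by auto
    qed
    have "\<And>U. U \<in> ?K \<Longrightarrow> openin T U" using oP oPx by blast
    hence "openin T (\<Union>?K)" by (rule openin_Union)
    moreover have "\<Union>?K = P \<union> (S - {x0})" by auto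
    ultimately have o: "openin T (P \<union> (S - {x0}))" by simp
    have "f S = f {x0} + f (S - {x0}) - f {}" by (rule mod_sub[OF m]) (use x0 SX in auto)
    hence fS0: "f (S - {x0}) = -1" using px[OF x0] fS e by auto
    have "f (P \<union> (S - {x0})) = f P + f (S - {x0}) - f {}"
      by (rule mod_disj[OF m PX]) (use SX PS in auto)
    hence f0: "f (P \<union> (S - {x0})) = 0" using fP fS0 e by simp
    have "P \<noteq> {}" using fP e by auto
    moreover have "x0 \<notin> P \<union> (S - {x0})" using x0 PS by auto
    ultimately show False using o op f0 x0 SX by auto
  qed
  then obtain b where b: "b \<in> S" "f {b} = -1" by auto
  have bX: "b \<in> X" using b SX by auto
  let ?Y = "X - {b}"
  have vY: "f B = 0 \<or> f B = 1" if B: "B \<subseteq> ?Y" for B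
  proof -
    have "f ({b} \<union> B) = f {b} + f B - f {}" by (rule mod_disj[OF m]) (use B bX in auto)
    moreover have "f ({b} \<union> B) \<in> {-1,0,1}" using vals[of "{b} \<union> B"] B bX by auto
    moreover have "f B \<in> {-1,0,1}" using vals[of B] B by auto
    ultimately show ?thesis using b e by auto
  qed
  have nb: "b \<notin> A" if A: "A \<subseteq> X" "f A = 1" for A
  proof
    assume bA: "b \<in> A"
    have "f A = f {b} + f (A - {b}) - f {}" by (rule mod_sub[OF m]) (use bA A in auto)
    moreover have "f (A - {b}) \<in> {-1,0,1}" using vals[of "A - {b}"] A by auto
    ultimately show False using A b e by auto
  qed
  have A1Y: "A1 \<subseteq> ?Y" using nb[OF A1] A1 by auto
  have "f ?Y = f A1 + f (?Y - A1) - f {}" by (rule mod_sub[OF m A1Y]) auto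
  moreover have "f (?Y - A1) = 0 \<or> f (?Y - A1) = 1" by (rule vY) auto
  moreover have "f ?Y = 0 \<or> f ?Y = 1" by (rule vY) auto
  ultimately have fY: "f ?Y = 1" using A1 e by auto
  let ?F = "{B. B \<subseteq> ?Y \<and> f B = 1}"
  have U: "ultrafilter_on ?Y ?F" by (rule ultra_of[OF m _ vY e fY]) auto
  have W: "{A \<in> Pow X. f A = 1} = ?F" using nb by auto
  have HW: "{U. openin T U} = {{},X} \<union> ?F" using H W by simp
  show ?thesis unfolding F1_def
    by (intro bexI[OF _ bX] exI[of _ ?F] conjI disjI1 U HW)
qed

lemma main_pos:
  assumes sur: "f ` Pow X = {-1,0,1}" and m: "modular X f"
    and H: "{U. openin T U} = {{},X} \<union> {A \<in> Pow X. f A = 1}"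
  shows "F1 X T \<or> F2 X T \<or> F3 X T"
proof -
  have vals: "\<And>A. A \<subseteq> X \<Longrightarrow> f A \<in> {-1,0,1}" using sur by blast
  have ex: "\<And>v. v \<in> {-1,0,1} \<Longrightarrow> \<exists>A\<subseteq>X. f A = v"
  proof -
    fix v :: int assume "v \<in> {-1,0,1}"
    hence "v \<in> f ` Pow X" using sur by simp
    thus "\<exists>A\<subseteq>X. f A = v" by auto
  qed
  have "f {} \<in> {-1,0,1}" using vals by auto
  then consider "f {} = -1" | "f {} = 0" | "f {} = 1" by auto
  then show ?thesis
  proof cases
    case 1 then show ?thesis using case_m1[OF m vals ex H] by blast
  next
    case 2 then show ?thesis using case_0[OF m vals ex H] by blast
  next
    case 3 then show ?thesis using case_p1[OF m vals ex H] by blast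
  qed
qed

theorem theorem3:
  fixes T :: "'a topology"
  defines "X \<equiv> topspace T"
  shows "(\<exists>f :: 'a set \<Rightarrow> int.
            f ` Pow X = {-1, 0, 1}
          \<and> (\<forall>A B. A \<subseteq> X \<longrightarrow> B \<subseteq> X \<longrightarrow> f A + f B = f (A \<union> B) + f (A \<inter> B))
          \<and> ({U. openin T U} = {{}, X} \<union> {A \<in> Pow X. f A = 1}
             \<or> {U. openin T U} = {{}, X} \<union> {A \<in> Pow X. f A = -1}))
     \<longleftrightarrow>
         ((\<exists>a \<in> X. \<exists>F'. ultrafilter_on (X - {a}) F'
              \<and> ({U. openin T U} = {{}, X} \<union> F'
                 \<or> {U. openin T U} = {{}, X} \<union> (\<lambda>F. insert a F) ` F'))
        \<or> (\<exists>A. A \<subseteq> X \<and> (\<exists>F' F''. free_ultrafilter_on A F' \<and> free_ultrafilter_on (X - A) F''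
              \<and> {U. openin T U} = {{}, X} \<union> {G' \<union> G'' | G' G''. G' \<in> F' \<and> G'' \<in> F''}))
        \<or> (\<exists>a \<in> X. \<exists>b \<in> X. a \<noteq> b
              \<and> {U. openin T U} = {{}, X} \<union> Pow (X - {a, b})))"
proof -
  have L2R: "F1 X T \<or> F2 X T \<or> F3 X T" if LL: "LHS X T"
  proof -
    from LL obtain f :: "'a set \<Rightarrow> int" where sur: "f ` Pow X = {-1,0,1}"
      and m0: "\<forall>A B. A \<subseteq> X \<longrightarrow> B \<subseteq> X \<longrightarrow> f A + f B = f (A \<union> B) + f (A \<inter> B)"
      and H: "{U. openin T U} = {{}, X} \<union> {A \<in> Pow X. f A = 1}
             \<or> {U. openin T U} = {{}, X} \<union> {A \<in> Pow X. f A = -1}"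
      unfolding LHS_def by (elim exE conjE) (rule that)
    have m: "modular X f" unfolding modular_def by (rule m0)
    show ?thesis
    proof (cases "{U. openin T U} = {{}, X} \<union> {A \<in> Pow X. f A = 1}")
      case True
      then show ?thesis by (rule main_pos[OF sur m])
    next
      case False
      have H': "{U. openin T U} = {{}, X} \<union> {A \<in> Pow X. f A = -1}"
        using H
      proof (rule disjE)
        assume "{U. openin T U} = {{}, X} \<union> {A \<in> Pow X. f A = 1}"
        with False show ?thesis by (rule notE)
      qed
      let ?g = "\<lambda>A. - f A"
      have sur': "?g ` Pow X = {-1,0,1}"
      proof -
        have "?g ` Pow X = uminus ` (f ` Pow X)" by (simp add: image_image)
        also have "\<dots> = {-1,0,1}" using sur by auto
        finally show ?thesis .
      qed
      have m': "modular X ?g" unfolding modular_def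
      proof (intro allI impI)
        fix A B assume AB: "A \<subseteq> X" "B \<subseteq> X"
        have "f A + f B = f (A \<union> B) + f (A \<inter> B)" using m0 AB by blast
        thus "- f A + - f B = - f (A \<union> B) + - f (A \<inter> B)" by simp
      qed
      have "{A \<in> Pow X. ?g A = 1} = {A \<in> Pow X. f A = -1}" by auto
      hence "{U. openin T U} = {{}, X} \<union> {A \<in> Pow X. ?g A = 1}" using H' by simp
      then show ?thesis by (rule main_pos[OF sur' m'])
    qed
  qed
  have R2L: "LHS X T" if RR: "F1 X T \<or> F2 X T \<or> F3 X T"
  proof -
    consider "F1 X T" | "F2 X T" | "F3 X T" using RR by blast
    then show ?thesis
    proof cases
      case 1
      then obtain a F' where a: "a \<in> X" and U: "ultrafilter_on (X - {a}) F'"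
        and HH: "{U. openin T U} = {{}, X} \<union> F' \<or> {U. openin T U} = {{}, X} \<union> (\<lambda>F. insert a F) ` F'"
        unfolding F1_def by (elim bexE exE conjE) (rule that)
      from HH show ?thesis
      proof
        assume "{U. openin T U} = {{}, X} \<union> F'" then show ?thesis by (rule form1a[OF a U])
      next
        assume "{U. openin T U} = {{}, X} \<union> (\<lambda>F. insert a F) ` F'" then show ?thesis by (rule form1b[OF a U])
      qed
    next
      case 2
      then obtain A F' F'' where A: "A \<subseteq> X" and U1: "ultrafilter_on A F'" and U2: "ultrafilter_on (X - A) F''"
        and HH: "{U. openin T U} = {{}, X} \<union> {G' \<union> G'' | G' G''. G' \<in> F' \<and> G'' \<in> F''}"
        unfolding F2_def free_ultrafilter_on_def by (elim exE conjE) (rule that)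
      show ?thesis by (rule form2[OF A U1 U2 HH])
    next
      case 3
      then obtain a b where a: "a \<in> X" and b: "b \<in> X" and ab: "a \<noteq> b"
        and HH: "{U. openin T U} = {{}, X} \<union> Pow (X - {a, b})"
        unfolding F3_def by (elim bexE conjE) (rule that)
      show ?thesis by (rule form3[OF a b ab HH])
    qed
  qed
  have "LHS X T \<longleftrightarrow> F1 X T \<or> F2 X T \<or> F3 X T" using L2R R2L by blast
  thus ?thesis unfolding LHS_def F1_def F2_def F3_def .
qed

end
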